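(* Let $A$ be a bounded set in a Banach space $X$. Then $\gamma_0(A)\le\operatorname{bs}(A)$.
   Context: $\gamma_0(A)=\sup\{|\lim_m\lim_n x_m^*(x_n)| : (x_m^* )\text{ a sequence in }B_{X^*}\text{ weak}^*\text{ converging to }0,\ (x_n)\text{ a sequence in }A,\text{ and all the involved limits exist}\}$, where $B_{X^*}$ is the closed unit ball of $X^*$. For a bounded sequence $(x_k)$: $\operatorname{ca}(x_k)=\inf_{n}\sup\{\|x_k-x_l\|: k,l\ge n\}$, $\operatorname{cca}(x_k)=\operatorname{ca}(\frac1k\sum_{i=1}^k x_i)$, $\widetilde{\operatorname{cca}}(x_k)=\inf\{\operatorname{cca}(x_{k_n}) : (x_{k_n})\text{ a subsequence of }(x_k)\}$, and $\operatorname{bs}(A)=\sup\{\widetilde{\operatorname{cca}}(x_k): (x_k)\subset A\}$. *)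

theory Defs
  imports "HOL-Analysis.Analysis"
begin

text \<open>Sequences are indexed by nat starting at 0 (the paper indexes from 1).\<close>

definition ca :: "(nat \<Rightarrow> 'a::real_normed_vector) \<Rightarrow> real" where
  "ca x = (INF n. SUP p \<in> {n..} \<times> {n..}. norm (x (fst p) - x (snd p)))"

definition cesaro :: "(nat \<Rightarrow> 'a::real_normed_vector) \<Rightarrow> nat \<Rightarrow> 'a" where
  "cesaro x k = (1 / real (Suc k)) *\<^sub>R (\<Sum>i\<le>k. x i)"

definition cca :: "(nat \<Rightarrow> 'a::real_normed_vector) \<Rightarrow> real" where
  "cca x = ca (cesaro x)"

definition cca_tilde :: "(nat \<Rightarrow> 'a::real_normed_vector) \<Rightarrow> real" where
  "cca_tilde x = (INF r \<in> {r. strict_mono r}. cca (x \<circ> r))"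

definition bs :: "'a::real_normed_vector set \<Rightarrow> real" where
  "bs A = (SUP x \<in> {x. \<forall>k. x k \<in> A}. cca_tilde x)"

definition gamma0 :: "'a::real_normed_vector set \<Rightarrow> real" where
  "gamma0 A = Sup {\<bar>L\<bar> | L. \<exists>(f :: nat \<Rightarrow> 'a \<Rightarrow>\<^sub>L real) (x :: nat \<Rightarrow> 'a) (M :: nat \<Rightarrow> real).
      (\<forall>m. norm (f m) \<le> 1) \<and> (\<forall>y. (\<lambda>m. blinfun_apply (f m) y) \<longlonglongrightarrow> 0) \<and>
      (\<forall>n. x n \<in> A) \<and> (\<forall>m. (\<lambda>n. blinfun_apply (f m) (x n)) \<longlonglongrightarrow> M m) \<and> M \<longlonglongrightarrow> L}"

end

theory Submission
  imports Defs
begin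

lemma cesaro_bound:
  fixes x :: "nat \<Rightarrow> 'a::real_normed_vector"
  assumes "\<And>k. norm (x k) \<le> B"
  shows "norm (cesaro x k) \<le> B"
proof -
  have "norm (\<Sum>i\<le>k. x i) \<le> (\<Sum>i\<le>k. B)"
    by (rule order_trans[OF norm_sum sum_mono]) (use assms in auto)
  also have "\<dots> = real (Suc k) * B" by simp
  finally show ?thesis unfolding cesaro_def
    by (simp add: field_simps)
qed

lemma sup_bdd:
  fixes c :: "nat \<Rightarrow> 'a::real_normed_vector"
  assumes "\<And>k. norm (c k) \<le> B"
  shows "bdd_above ((\<lambda>p. norm (c (fst p) - c (snd p))) ` S)"
proof (rule bdd_aboveI2)
  fix p show "norm (c (fst p) - c (snd p)) \<le> 2*B"
    using norm_triangle_ineq4[of "c (fst p)" "c (snd p)"] assms[of "fst p"] assms[of "snd p"] by linarith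
qed

lemma ca_nonneg:
  fixes c :: "nat \<Rightarrow> 'a::real_normed_vector"
  assumes "\<And>k. norm (c k) \<le> B"
  shows "0 \<le> ca c"
  unfolding ca_def
proof (rule cINF_greatest)
  fix n
  show "0 \<le> (SUP p\<in>{n..} \<times> {n..}. norm (c (fst p) - c (snd p)))"
    by (rule cSUP_upper2[of _ _ "(n,n)"]) (auto intro: sup_bdd[OF assms])
qed simp

lemma ca_le:
  fixes c :: "nat \<Rightarrow> 'a::real_normed_vector"
  assumes "\<And>k. norm (c k) \<le> B"
  shows "ca c \<le> 2*B"
proof -
  have "ca c \<le> (SUP p\<in>{0..} \<times> {0..}. norm (c (fst p) - c (snd p)))"
    unfolding ca_def
  proof (rule cINF_lower)
    show "bdd_below (range (\<lambda>n. SUP p\<in>{n..} \<times> {n..}. norm (c (fst p) - c (snd p))))"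
    proof (rule bdd_belowI2)
      fix n show "0 \<le> (SUP p\<in>{n..} \<times> {n..}. norm (c (fst p) - c (snd p)))"
        by (rule cSUP_upper2[of _ _ "(n,n)"]) (auto intro: sup_bdd[OF assms])
    qed
  qed simp
  also have "\<dots> \<le> 2*B"
  proof (rule cSUP_least)
    fix p show "norm (c (fst p) - c (snd p)) \<le> 2*B"
    using norm_triangle_ineq4[of "c (fst p)" "c (snd p)"] assms[of "fst p"] assms[of "snd p"] by linarith
  qed auto
  finally show ?thesis .
qed

lemma ca_ge:
  fixes c :: "nat \<Rightarrow> 'a::real_normed_vector"
  assumes "\<And>k. norm (c k) \<le> B"
    and "\<And>n. \<exists>p q. p \<ge> n \<and> q \<ge> n \<and> norm (c p - c q) \<ge> t"
  shows "t \<le> ca c"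
  unfolding ca_def
proof (rule cINF_greatest)
  fix n
  obtain p q where pq: "p \<ge> n" "q \<ge> n" "norm (c p - c q) \<ge> t" using assms(2) by blast
  show "t \<le> (SUP p\<in>{n..} \<times> {n..}. norm (c (fst p) - c (snd p)))"
    by (rule cSUP_upper2[of _ _ "(p,q)"]) (use pq in \<open>auto intro: sup_bdd[OF assms(1)]\<close>)
qed simp

lemma key_est:
  fixes g :: "'a::real_normed_vector \<Rightarrow>\<^sub>L real" and y :: "nat \<Rightarrow> 'a"
  assumes g: "norm g \<le> 1" and pq: "p < q"
    and small: "\<And>i. i \<le> p \<Longrightarrow> \<bar>g (y i)\<bar> \<le> d"
    and big: "\<And>i. p < i \<Longrightarrow> i \<le> q \<Longrightarrow> \<bar>g (y i) - L\<bar> \<le> d"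
  shows "norm (cesaro y q - cesaro y p) \<ge> \<bar>L\<bar> - 2*d - real (Suc p) * \<bar>L\<bar> / real (Suc q)"
proof -
  have gc: "g (cesaro y k) = (\<Sum>i\<le>k. g (y i)) / real (Suc k)" for k
    unfolding cesaro_def by (simp add: blinfun.scaleR_right blinfun.sum_right)
  define S1 where "S1 = (\<Sum>i\<le>p. g (y i))"
  define S2 where "S2 = (\<Sum>i\<in>{p<..q}. g (y i))"
  have split: "{..q} = {..p} \<union> {p<..q}" using pq by auto
  have Sq: "(\<Sum>i\<le>q. g (y i)) = S1 + S2"
    unfolding S1_def S2_def split by (subst sum.union_disjoint) auto
  have "\<bar>S1\<bar> \<le> (\<Sum>i\<le>p. d)"
    unfolding S1_def by (rule order_trans[OF sum_abs sum_mono]) (use small in auto)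
  hence S1b: "\<bar>S1\<bar> \<le> real (Suc p) * d" by simp
  have "\<bar>S2 - (\<Sum>i\<in>{p<..q}. L)\<bar> \<le> (\<Sum>i\<in>{p<..q}. d)"
    unfolding S2_def sum_subtractf[symmetric]
    by (rule order_trans[OF sum_abs sum_mono]) (use big in auto)
  hence S2b: "\<bar>S2 - real (q - p) * L\<bar> \<le> real (q - p) * d" by simp
  have d0: "0 \<le> d" using small[of 0] by auto
  have qp: "real (q - p) = real (Suc q) - real (Suc p)" using pq by auto
  have A1: "\<bar>g (cesaro y p)\<bar> \<le> d" using S1b unfolding gc S1_def[symmetric]
    by (simp add: divide_le_eq mult.commute)
  have "\<bar>(S1 + S2) - real (Suc q) * L\<bar> \<le> real (Suc q) * d + real (Suc p) * \<bar>L\<bar>"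
  proof -
    have "(S1 + S2) - real (Suc q) * L = S1 + (S2 - real (q - p) * L) - real (Suc p) * L"
      unfolding qp by (simp add: algebra_simps)
    also have "\<bar>\<dots>\<bar> \<le> \<bar>S1\<bar> + \<bar>S2 - real (q - p) * L\<bar> + real (Suc p) * \<bar>L\<bar>"
      by (simp add: abs_mult abs_triangle_ineq4 order_trans[OF abs_triangle_ineq4] abs_triangle_ineq)
    also have "\<dots> \<le> real (Suc p) * d + real (q - p) * d + real (Suc p) * \<bar>L\<bar>"
      using S1b S2b by linarith
    also have "\<dots> = real (Suc q) * d + real (Suc p) * \<bar>L\<bar>"
      unfolding qp by (simp add: algebra_simps)
    finally show ?thesis .
  qed
  hence "\<bar>(S1 + S2) / real (Suc q) - L\<bar> \<le> d + real (Suc p) * \<bar>L\<bar> / real (Suc q)"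
  proof -
    assume h: "\<bar>(S1 + S2) - real (Suc q) * L\<bar> \<le> real (Suc q) * d + real (Suc p) * \<bar>L\<bar>"
    have "(S1 + S2) / real (Suc q) - L = ((S1 + S2) - real (Suc q) * L) / real (Suc q)"
      by (simp add: field_simps)
    hence "\<bar>(S1 + S2) / real (Suc q) - L\<bar> = \<bar>(S1 + S2) - real (Suc q) * L\<bar> / real (Suc q)"
      by simp
    also have "\<dots> \<le> (real (Suc q) * d + real (Suc p) * \<bar>L\<bar>) / real (Suc q)"
      using h by (simp add: divide_right_mono)
    also have "\<dots> = d + real (Suc p) * \<bar>L\<bar> / real (Suc q)"
      by (simp add: field_simps)
    finally show ?thesis .
  qed
  hence A2: "\<bar>g (cesaro y q) - L\<bar> \<le> d + real (Suc p) * \<bar>L\<bar> / real (Suc q)"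
    unfolding gc Sq .
  have "\<bar>g (cesaro y q - cesaro y p)\<bar> \<le> norm g * norm (cesaro y q - cesaro y p)"
    by (metis norm_blinfun real_norm_def)
  also have "\<dots> \<le> norm (cesaro y q - cesaro y p)"
    using g by (simp add: mult_left_le_one_le)
  finally have "\<bar>g (cesaro y q) - g (cesaro y p)\<bar> \<le> norm (cesaro y q - cesaro y p)"
    by (simp add: blinfun.diff_right)
  thus ?thesis using A1 A2 by linarith
qed


theorem lemma3p5:
  fixes A :: "'a::banach set"
  assumes "bounded A"
  shows "gamma0 A \<le> bs A"
proof (cases "A = {}")
  case True
  thus ?thesis by (simp add: gamma0_def bs_def)
next
  case False
  then obtain a0 where a0: "a0 \<in> A" by blast
  obtain B where B: "\<And>a. a \<in> A \<Longrightarrow> norm a \<le> B" using assms bounded_iff by blast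
  have cca_nonneg: "0 \<le> cca x" if "\<And>k. x k \<in> A" for x :: "nat \<Rightarrow> 'a"
    unfolding cca_def by (rule ca_nonneg[where B=B], rule cesaro_bound) (use that B in auto)
  have ct_le: "cca_tilde x \<le> 2*B" if x: "\<And>k. x k \<in> A" for x :: "nat \<Rightarrow> 'a"
  proof -
    have "cca_tilde x \<le> cca (x \<circ> id)"
      unfolding cca_tilde_def
    proof (rule cINF_lower)
      show "bdd_below ((\<lambda>r. cca (x \<circ> r)) ` {r. strict_mono r})"
        by (rule bdd_belowI2[where m=0]) (auto intro!: cca_nonneg x)
    qed (auto simp: strict_mono_def)
    also have "\<dots> \<le> 2*B" unfolding cca_def
      by (rule ca_le, rule cesaro_bound) (use x B in auto)
    finally show ?thesis .
  qed
  have bdd: "bdd_above (cca_tilde ` {x. \<forall>k. x k \<in> A})"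
    by (rule bdd_aboveI2[where M="2*B"]) (auto intro: ct_le)
  have main: "\<bar>L\<bar> - 3*d \<le> bs A"
    if f1: "\<forall>m. norm (f m) \<le> 1" and fw: "\<forall>y. (\<lambda>m. blinfun_apply (f m) y) \<longlonglongrightarrow> 0"
      and xA: "\<forall>n. x n \<in> A" and fM: "\<forall>m. (\<lambda>n. blinfun_apply (f m) (x n)) \<longlonglongrightarrow> M m"
      and hML: "M \<longlonglongrightarrow> L" and d: "d > 0"
    for f :: "nat \<Rightarrow> 'a \<Rightarrow>\<^sub>L real" and x :: "nat \<Rightarrow> 'a" and M L and d :: real
  proof -
    have "\<exists>m. \<bar>M m - L\<bar> < d/2 \<and> (\<forall>n\<le>b. \<bar>f m (x n)\<bar> \<le> d)" for b
    proof -
      have e1: "eventually (\<lambda>m. \<bar>M m - L\<bar> < d/2) sequentially"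
        using tendsto_iff[THEN iffD1, OF hML, rule_format, of "d/2"] d by (simp add: dist_real_def)
      have "\<forall>n\<in>{..b}. eventually (\<lambda>m. \<bar>f m (x n)\<bar> \<le> d) sequentially"
      proof
        fix n
        have "eventually (\<lambda>m. dist (f m (x n)) 0 < d) sequentially"
          using tendsto_iff[THEN iffD1, OF fw[rule_format, of "x n"], rule_format, of d] d by simp
        thus "eventually (\<lambda>m. \<bar>f m (x n)\<bar> \<le> d) sequentially"
          by (rule eventually_mono) auto
      qed
      hence e2: "eventually (\<lambda>m. \<forall>n\<in>{..b}. \<bar>f m (x n)\<bar> \<le> d) sequentially"
        by (rule eventually_ball_finite[rotated]) simp
      from eventually_conj[OF e1 e2] obtain N where "\<And>n. n \<ge> N \<Longrightarrow> \<bar>M n - L\<bar> < d/2 \<and> (\<forall>k\<in>{..b}. \<bar>f n (x k)\<bar> \<le> d)"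
        unfolding eventually_sequentially by blast
      from this[OF order_refl] show ?thesis by auto
    qed
    hence "\<forall>b. \<exists>m. \<bar>M m - L\<bar> < d/2 \<and> (\<forall>n\<le>b. \<bar>f m (x n)\<bar> \<le> d)" by blast
    from choice[OF this] obtain mf where mf0: "\<forall>b. \<bar>M (mf b) - L\<bar> < d/2 \<and> (\<forall>n\<le>b. \<bar>f (mf b) (x n)\<bar> \<le> d)"
      by blast
    have mf: "\<And>b. \<bar>M (mf b) - L\<bar> < d/2" "\<And>b n. n \<le> b \<Longrightarrow> \<bar>f (mf b) (x n)\<bar> \<le> d"
      using mf0 by auto
    have "\<exists>N. \<forall>n\<ge>N. \<bar>f m (x n) - M m\<bar> < d/2" for m
      using LIMSEQ_iff[THEN iffD1, OF fM[rule_format, of m], rule_format, of "d/2"] d by simp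
    hence "\<forall>m. \<exists>N. \<forall>n\<ge>N. \<bar>f m (x n) - M m\<bar> < d/2" by blast
    from choice[OF this] obtain Nf where Nf0: "\<forall>m. \<forall>n\<ge>Nf m. \<bar>f m (x n) - M m\<bar> < d/2" by blast
    have Nf: "\<And>m n. n \<ge> Nf m \<Longrightarrow> \<bar>f m (x n) - M m\<bar> < d/2" using Nf0 by blast
    define nn :: "nat \<Rightarrow> nat" where "nn = rec_nat (Nf (mf 0)) (\<lambda>k v. max (Suc v) (Nf (mf v)))"
    define mm where "mm k = (if k = 0 then mf 0 else mf (nn (k - 1)))" for k
    have nn0: "nn 0 = Nf (mf 0)" and nnS: "nn (Suc k) = max (Suc (nn k)) (Nf (mf (nn k)))" for k
      unfolding nn_def by simp_all
    have smn: "strict_mono nn" unfolding strict_mono_Suc_iff nnS by (simp add: less_max_iff_disj)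
    have nnN: "nn k \<ge> Nf (mm k)" for k
      by (cases k) (auto simp: mm_def nn0 nnS)
    have mmL: "\<bar>M (mm k) - L\<bar> < d/2" for k unfolding mm_def using mf(1) by simp
    define y where "y = x \<circ> nn"
    have yA: "y \<in> {x. \<forall>k. x k \<in> A}" using xA unfolding y_def by auto
    have "\<bar>L\<bar> - 3*d \<le> cca_tilde y"
      unfolding cca_tilde_def
    proof (rule cINF_greatest)
      show "{r::nat\<Rightarrow>nat. strict_mono r} \<noteq> {}"
      proof
        assume "{r::nat\<Rightarrow>nat. strict_mono r} = {}"
        from equals0D[OF this, of "\<lambda>n::nat. n"] show False by (simp add: strict_mono_def)
      qed
    next
      fix r :: "nat \<Rightarrow> nat" assume "r \<in> {r. strict_mono r}"
      hence r: "strict_mono r" by simp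
      define z where "z = y \<circ> r"
      show "\<bar>L\<bar> - 3*d \<le> cca (y \<circ> r)"
        unfolding cca_def z_def[symmetric]
      proof (rule ca_ge[where B=B])
        show "norm (cesaro z k) \<le> B" for k
          by (rule cesaro_bound, unfold z_def y_def o_def, rule B, rule xA[rule_format])
      next
        fix p
        have lim0: "(\<lambda>q. (real (Suc p) * \<bar>L\<bar>) / real (Suc q)) \<longlonglongrightarrow> 0"
          by (rule LIMSEQ_Suc[OF lim_const_over_n])
        have "eventually (\<lambda>q. (real (Suc p) * \<bar>L\<bar>) / real (Suc q) < d) sequentially"
          using tendsto_iff[THEN iffD1, OF lim0, rule_format, of d] d by (simp add: dist_real_def)
        moreover have "eventually (\<lambda>q. q > p) sequentially"
          by (rule eventually_gt_at_top)
        ultimately have "eventually (\<lambda>q. (real (Suc p) * \<bar>L\<bar>) / real (Suc q) < d \<and> q > p) sequentially"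
          by (rule eventually_conj)
        then obtain N where N: "\<And>q. q \<ge> N \<Longrightarrow> (real (Suc p) * \<bar>L\<bar>) / real (Suc q) < d \<and> q > p"
          unfolding eventually_sequentially by blast
        obtain q where q: "q > p" "(real (Suc p) * \<bar>L\<bar>) / real (Suc q) < d"
          using N[OF order_refl] by blast
        define k where "k = r (Suc p)"
        have "norm (cesaro z q - cesaro z p) \<ge> \<bar>L\<bar> - 2*d - real (Suc p) * \<bar>L\<bar> / real (Suc q)"
        proof (rule key_est[where g="f (mm k)"])
          show "norm (f (mm k)) \<le> 1" using f1 by simp
          show "p < q" by fact
        next
          fix i assume i: "i \<le> p"
          have "r i < k" unfolding k_def using r i by (simp add: strict_mono_less)
          hence k0: "k \<noteq> 0" and "r i \<le> k - 1" by auto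
          hence "nn (r i) \<le> nn (k - 1)" using smn by (simp add: strict_mono_less_eq)
          thus "\<bar>f (mm k) (z i)\<bar> \<le> d" using mf(2) k0 unfolding mm_def z_def y_def by simp
        next
          fix i assume i: "p < i" "i \<le> q"
          have "k \<le> r i" unfolding k_def using r i by (simp add: strict_mono_less_eq)
          hence "nn k \<le> nn (r i)" using smn by (simp add: strict_mono_less_eq)
          hence "Nf (mm k) \<le> nn (r i)" using nnN[of k] by linarith
          hence "\<bar>f (mm k) (x (nn (r i))) - M (mm k)\<bar> < d/2" by (rule Nf)
          with mmL[of k] show "\<bar>f (mm k) (z i) - L\<bar> \<le> d" unfolding z_def y_def o_def by linarith
        qed
        hence "\<bar>L\<bar> - 3*d \<le> norm (cesaro z p - cesaro z q)"
          using q(2) norm_minus_commute[of "cesaro z p" "cesaro z q"] by linarith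
        thus "\<exists>p' q'. p' \<ge> p \<and> q' \<ge> p \<and> \<bar>L\<bar> - 3*d \<le> norm (cesaro z p' - cesaro z q')"
          using q(1) by (intro exI[of _ p] exI[of _ q]) auto
      qed
    qed
    also have "\<dots> \<le> bs A" unfolding bs_def
      by (rule cSUP_upper[OF yA bdd])
    finally show ?thesis .
  qed
  show ?thesis unfolding gamma0_def
  proof (rule cSup_least)
    let ?f = "\<lambda>m::nat. 0 :: 'a \<Rightarrow>\<^sub>L real"
    have "\<bar>0::real\<bar> \<in> {\<bar>L\<bar> | L. \<exists>(f :: nat \<Rightarrow> 'a \<Rightarrow>\<^sub>L real) (x :: nat \<Rightarrow> 'a) (M :: nat \<Rightarrow> real).
      (\<forall>m. norm (f m) \<le> 1) \<and> (\<forall>y. (\<lambda>m. blinfun_apply (f m) y) \<longlonglongrightarrow> 0) \<and>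
      (\<forall>n. x n \<in> A) \<and> (\<forall>m. (\<lambda>n. blinfun_apply (f m) (x n)) \<longlonglongrightarrow> M m) \<and> M \<longlonglongrightarrow> L}"
      using a0 by (intro CollectI exI[of _ 0] conjI exI[of _ ?f] exI[of _ "\<lambda>_. a0"] exI[of _ "\<lambda>_. 0"]) auto
    thus "{\<bar>L\<bar> | L. \<exists>(f :: nat \<Rightarrow> 'a \<Rightarrow>\<^sub>L real) (x :: nat \<Rightarrow> 'a) (M :: nat \<Rightarrow> real).
      (\<forall>m. norm (f m) \<le> 1) \<and> (\<forall>y. (\<lambda>m. blinfun_apply (f m) y) \<longlonglongrightarrow> 0) \<and>
      (\<forall>n. x n \<in> A) \<and> (\<forall>m. (\<lambda>n. blinfun_apply (f m) (x n)) \<longlonglongrightarrow> M m) \<and> M \<longlonglongrightarrow> L} \<noteq> {}"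
      by blast
  next
    fix v assume "v \<in> {\<bar>L\<bar> | L. \<exists>(f :: nat \<Rightarrow> 'a \<Rightarrow>\<^sub>L real) (x :: nat \<Rightarrow> 'a) (M :: nat \<Rightarrow> real).
      (\<forall>m. norm (f m) \<le> 1) \<and> (\<forall>y. (\<lambda>m. blinfun_apply (f m) y) \<longlonglongrightarrow> 0) \<and>
      (\<forall>n. x n \<in> A) \<and> (\<forall>m. (\<lambda>n. blinfun_apply (f m) (x n)) \<longlonglongrightarrow> M m) \<and> M \<longlonglongrightarrow> L}"
    then obtain L f x M where v: "v = \<bar>L\<bar>" and h: "\<forall>m. norm (f m) \<le> 1" "\<forall>y. (\<lambda>m. blinfun_apply (f m) y) \<longlonglongrightarrow> 0"
      "\<forall>n. x n \<in> A" "\<forall>m. (\<lambda>n. blinfun_apply (f m) (x n)) \<longlonglongrightarrow> M m" "M \<longlonglongrightarrow> L"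
      by blast
    show "v \<le> bs A" unfolding v
    proof (rule field_le_epsilon)
      fix e :: real assume "e > 0"
      from main[OF h, of "e/3"] this show "\<bar>L\<bar> \<le> bs A + e" by simp
    qed
  qed
qed

end
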